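(* Let $\mathcal K$ be any simplicial complex on $[m]$ and $\mathbf k$ a commutative ring. In the homology algebra $H(\Omega_*\mathbf k\langle\mathcal K\rangle)$ of the dg-algebra below, the classes $u_i=[\chi_{e_i}]$ and $w_I=[\psi_I]$ (for $I\in\mathrm{MF}(\mathcal K)$) satisfy: (1) $u_i^2=0$ for all $i$, and $[u_i,u_j]=0$ for all $\{i,j\}\in\mathcal K$; (2) $[u_i,w_I]=0$ if $i\in I\in\mathrm{MF}(\mathcal K)$; (3) $\sum_{i\in L,\ L\setminus\{i\}\notin\mathcal K}[u_i,w_{L\setminus\{i\}}]=0$ for every $L\in\mathrm{AMF}(\mathcal K)$.
   Context: $\Omega_*\mathbf k\langle\mathcal K\rangle$ is the dg-algebra $T(\chi_\alpha:\alpha\in\mathbb Z_{\ge0}^m\setminus\{0\},\ \operatorname{supp}\alpha\in\mathcal K)$ (free graded associative algebra), $\deg\chi_\alpha=2|\alpha|-1$ where $|\alpha|=\sum\alpha_i$ and $\operatorname{supp}\alpha=\{i:\alpha_i\ne0\}$, with differential $d(\chi_\alpha)=\sum_{\alpha=\beta+\gamma,\ \beta,\gamma\ne0}\chi_\beta\chi_\gamma$ extended as a derivation with Koszul signs. For $A\subseteq[m]$ write $\chi_A=\chi_{\sum_{i\in A}e_i}$, and for $I$ with all proper subsets in $\mathcal K$ set $\psi_I=\sum_{I=A\sqcup B,\ A,B\ne\varnothing}\chi_A\chi_B$ (a cycle). (This homology algebra is isomorphic to $H_*(\Omega DJ_{\mathcal K};\mathbf k)\cong\operatorname{Ext}_{\mathbf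 k[\mathcal K]}(\mathbf k,\mathbf k)$.) $[x,y]=xy-(-1)^{|x||y|}yx$. $\mathrm{MF}(\mathcal K)$: subsets $I\notin\mathcal K$ with all proper subsets in $\mathcal K$. $\mathrm{AMF}(\mathcal K)$: subsets $L$ with all subsets of size $\le|L|-2$ in $\mathcal K$ but not all subsets of size $|L|-1$ in $\mathcal K$ (i.e. $\partial^2\Delta_L\subseteq\mathcal K_L\subsetneq\partial\Delta_L$). *)

theory Defs
  imports Main
begin

text \<open>Vertices are natural numbers in [m] = {1..m}.  A multi-index alpha in Z_{>=0}^m is a
  function nat => nat (its support lies in [m] whenever supp alpha is a face of K).
  Elements of the free graded algebra T(chi_alpha) over the commutative ring 'k are
  finitely supported functions from words (lists of multi-indices) to 'k.\<close>

type_synonym mindex = "nat \<Rightarrow> nat"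
type_synonym word = "mindex list"
type_synonym 'k tens = "word \<Rightarrow> 'k"

definition simplicial_complex :: "nat \<Rightarrow> nat set set \<Rightarrow> bool" where
  "simplicial_complex m K \<longleftrightarrow> {} \<in> K \<and> (\<forall>\<sigma>\<in>K. \<sigma> \<subseteq> {1..m}) \<and> (\<forall>\<sigma>\<in>K. \<forall>\<tau>. \<tau> \<subseteq> \<sigma> \<longrightarrow> \<tau> \<in> K)"

definition msupp :: "mindex \<Rightarrow> nat set" where
  "msupp \<alpha> = {i. \<alpha> i \<noteq> 0}"

definition valid_gen :: "nat set set \<Rightarrow> mindex \<Rightarrow> bool" where
  "valid_gen K \<alpha> \<longleftrightarrow> \<alpha> \<noteq> (\<lambda>_. 0) \<and> msupp \<alpha> \<in> K"

definition mdeg :: "mindex \<Rightarrow> nat" where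
  "mdeg \<alpha> = 2 * (\<Sum>i\<in>msupp \<alpha>. \<alpha> i) - 1"

text \<open>The underlying module of Omega_* k<K>: finitely supported combinations of words in valid generators.\<close>
definition alg :: "nat set set \<Rightarrow> ('k::comm_ring_1) tens set" where
  "alg K = {x. finite {w. x w \<noteq> 0} \<and> (\<forall>w. x w \<noteq> 0 \<longrightarrow> (\<forall>\<alpha>\<in>set w. valid_gen K \<alpha>))}"

definition tadd :: "('k::comm_ring_1) tens \<Rightarrow> 'k tens \<Rightarrow> 'k tens" where
  "tadd x y = (\<lambda>w. x w + y w)"

definition tsub :: "('k::comm_ring_1) tens \<Rightarrow> 'k tens \<Rightarrow> 'k tens" where
  "tsub x y = (\<lambda>w. x w - y w)"

definition tsmul :: "'k::comm_ring_1 \<Rightarrow> 'k tens \<Rightarrow> 'k tens" where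
  "tsmul c x = (\<lambda>w. c * x w)"

definition tzero :: "('k::comm_ring_1) tens" where
  "tzero = (\<lambda>w. 0)"

definition tsum :: "('a \<Rightarrow> ('k::comm_ring_1) tens) \<Rightarrow> 'a set \<Rightarrow> 'k tens" where
  "tsum f A = (\<lambda>w. \<Sum>a\<in>A. f a w)"

definition tmul :: "('k::comm_ring_1) tens \<Rightarrow> 'k tens \<Rightarrow> 'k tens" where
  "tmul x y = (\<lambda>w. \<Sum>j\<le>length w. x (take j w) * y (drop j w))"

definition mono :: "word \<Rightarrow> ('k::comm_ring_1) tens" where
  "mono u = (\<lambda>w. if w = u then 1 else 0)"

definition chi :: "mindex \<Rightarrow> ('k::comm_ring_1) tens" where
  "chi \<alpha> = mono [\<alpha>]"

definition dgen :: "mindex \<Rightarrow> ('k::comm_ring_1) tens" where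
  "dgen \<alpha> = tsum (\<lambda>\<beta>. tmul (chi \<beta>) (chi (\<lambda>i. \<alpha> i - \<beta> i)))
      {\<beta>. (\<forall>i. \<beta> i \<le> \<alpha> i) \<and> \<beta> \<noteq> (\<lambda>_. 0) \<and> \<beta> \<noteq> \<alpha>}"

text \<open>Differential of a word g_0 ... g_{n-1}, extended as a derivation with Koszul signs:
  the sign in front of the j-th term is (-1)^(deg g_0 + ... + deg g_{j-1}).\<close>
definition dword :: "word \<Rightarrow> ('k::comm_ring_1) tens" where
  "dword w = tsum (\<lambda>j. tsmul ((-1) ^ (\<Sum>k<j. mdeg (w ! k)))
       (tmul (tmul (mono (take j w)) (dgen (w ! j))) (mono (drop (Suc j) w)))) {..<length w}"

definition dd :: "('k::comm_ring_1) tens \<Rightarrow> 'k tens" where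
  "dd x = tsum (\<lambda>w. tsmul (x w) (dword w)) {w. x w \<noteq> 0}"

text \<open>A cycle represents zero in homology iff it is a boundary of an element of the dg-algebra.\<close>
definition is_boundary :: "nat set set \<Rightarrow> ('k::comm_ring_1) tens \<Rightarrow> bool" where
  "is_boundary K x \<longleftrightarrow> (\<exists>y\<in>alg K. dd y = x)"

text \<open>Graded commutator of homogeneous elements x (degree p) and y (degree q).\<close>
definition gcomm :: "('k::comm_ring_1) tens \<Rightarrow> nat \<Rightarrow> 'k tens \<Rightarrow> nat \<Rightarrow> 'k tens" where
  "gcomm x p y q = tsub (tmul x y) (tsmul ((-1) ^ (p * q)) (tmul y x))"

definition indic :: "nat set \<Rightarrow> mindex" where
  "indic A = (\<lambda>i. if i \<in> A then 1 else 0)"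

definition chiS :: "nat set \<Rightarrow> ('k::comm_ring_1) tens" where
  "chiS A = chi (indic A)"

definition psi :: "nat set \<Rightarrow> ('k::comm_ring_1) tens" where
  "psi I = tsum (\<lambda>A. tmul (chiS A) (chiS (I - A))) {A. A \<subseteq> I \<and> A \<noteq> {} \<and> A \<noteq> I}"

definition MF :: "nat \<Rightarrow> nat set set \<Rightarrow> nat set set" where
  "MF m K = {I. I \<subseteq> {1..m} \<and> I \<notin> K \<and> (\<forall>J. J \<subset> I \<longrightarrow> J \<in> K)}"

definition AMF :: "nat \<Rightarrow> nat set set \<Rightarrow> nat set set" where
  "AMF m K = {L. L \<subseteq> {1..m} \<and> (\<forall>J. J \<subseteq> L \<and> int (card J) \<le> int (card L) - 2 \<longrightarrow> J \<in> K)
               \<and> \<not> (\<forall>J. J \<subseteq> L \<and> int (card J) = int (card L) - 1 \<longrightarrow> J \<in> K)}"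

end

theory Submission
  imports Defs "HOL-Library.FuncSet"
begin


definition madd :: "mindex \<Rightarrow> mindex \<Rightarrow> mindex" where
  "madd a b = (\<lambda>i. a i + b i)"

lemma sum_of_bool_unique:
  assumes "finite A" "\<And>x y. x \<in> A \<Longrightarrow> y \<in> A \<Longrightarrow> Q x \<Longrightarrow> Q y \<Longrightarrow> x = y"
  shows "(\<Sum>x\<in>A. (of_bool (Q x) :: 'k::comm_ring_1)) = of_bool (\<exists>x\<in>A. Q x)"
proof (cases "\<exists>x\<in>A. Q x")
  case True
  then obtain x0 where x0: "x0 \<in> A" "Q x0" by blast
  have "(\<Sum>x\<in>A. (of_bool (Q x) :: 'k)) = (\<Sum>x\<in>A. if x = x0 then 1 else 0)"
    by (rule sum.cong) (use assms(2) x0 in auto)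
  also have "\<dots> = 1" using x0 assms(1) by simp
  finally show ?thesis using True by simp
next
  case False
  then show ?thesis by simp
qed

lemma mono_eval: "mono u w = (of_bool (w = u) :: 'k::comm_ring_1)"
  by (simp add: mono_def)

lemma take_drop_eq:
  assumes "j \<le> length w"
  shows "(take j w = u \<and> drop j w = v) \<longleftrightarrow> (j = length u \<and> w = u @ v)"
proof
  assume h: "take j w = u \<and> drop j w = v"
  then have "length u = j" using assms by auto
  moreover have "w = u @ v" using h by (metis append_take_drop_id)
  ultimately show "j = length u \<and> w = u @ v" by simp
next
  assume "j = length u \<and> w = u @ v"
  then show "take j w = u \<and> drop j w = v" by simp
qed

lemma tmul_mono: "tmul (mono u) (mono v) = (mono (u @ v) :: 'k::comm_ring_1 tens)"
proof
  fix w
  have "tmul (mono u) (mono v) w = (\<Sum>j\<le>length w. (if j = length u then (of_bool (w = u @ v) :: 'k) else 0))"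
    unfolding tmul_def mono_def
  proof (rule sum.cong)
    fix j assume "j \<in> {..length w}"
    then have j: "j \<le> length w" by simp
    show "(if take j w = u then 1 else 0) * (if drop j w = v then 1 else 0) = (if j = length u then (of_bool (w = u @ v) :: 'k) else 0)"
      using take_drop_eq[OF j, of u v] by (cases "take j w = u"; cases "drop j w = v") auto
  qed simp
  also have "\<dots> = mono (u @ v) w"
    by (auto simp: mono_def)
  finally show "tmul (mono u) (mono v) w = (mono (u @ v) w :: 'k)" .
qed

lemma tmul_tsum_left: "tmul (tsum f A) x = tsum (\<lambda>a. tmul (f a) x) A"
  unfolding tmul_def tsum_def
  apply (rule ext)
  apply (simp add: sum_distrib_right)
  by (rule sum.swap)

lemma tmul_tsum_right: "tmul x (tsum f A) = tsum (\<lambda>a. tmul x (f a)) A"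
  unfolding tmul_def tsum_def
  apply (rule ext)
  apply (simp add: sum_distrib_left)
  by (rule sum.swap)

lemma tsum_eval: "tsum f A w = (\<Sum>a\<in>A. f a w)"
  by (simp add: tsum_def)

definition Sg :: "mindex \<Rightarrow> mindex set" where
  "Sg \<gamma> = {\<beta>. (\<forall>i. \<beta> i \<le> \<gamma> i) \<and> \<beta> \<noteq> (\<lambda>_. 0) \<and> \<beta> \<noteq> \<gamma>}"

lemma finite_below:
  assumes "finite (msupp \<gamma>)"
  shows "finite {\<beta>::mindex. \<forall>i. \<beta> i \<le> \<gamma> i}"
proof -
  let ?D = "msupp \<gamma>"
  let ?B = "{\<beta>::mindex. \<forall>i. \<beta> i \<le> \<gamma> i}"
  have inj: "inj_on (\<lambda>\<beta>. restrict \<beta> ?D) ?B"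
  proof (rule inj_onI)
    fix x y assume x: "x \<in> ?B" and y: "y \<in> ?B" and e: "restrict x ?D = restrict y ?D"
    show "x = y"
    proof
      fix i show "x i = y i"
      proof (cases "i \<in> ?D")
        case True
        have "restrict x ?D i = restrict y ?D i" using e by simp
        then show ?thesis using True by simp
      next
        case False then have "\<gamma> i = 0" by (simp add: msupp_def)
        then show ?thesis using x y by (metis le_zero_eq mem_Collect_eq)
      qed
    qed
  qed
  have "(\<lambda>\<beta>. restrict \<beta> ?D) ` ?B \<subseteq> PiE ?D (\<lambda>i. {0..\<gamma> i})"
    by (auto simp: restrict_PiE_iff)
  moreover have "finite (PiE ?D (\<lambda>i. {0..\<gamma> i}))"
    using assms by (intro finite_PiE) auto
  ultimately have "finite ((\<lambda>\<beta>. restrict \<beta> ?D) ` ?B)" by (rule finite_subset)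
  then show ?thesis using inj by (rule finite_imageD)
qed

lemma finite_Sg: "finite (msupp \<gamma>) \<Longrightarrow> finite (Sg \<gamma>)"
  by (rule finite_subset[OF _ finite_below]) (auto simp: Sg_def)

lemma dgen_expand: "dgen \<gamma> = (tsum (\<lambda>\<beta>. mono [\<beta>, \<lambda>i. \<gamma> i - \<beta> i]) (Sg \<gamma>) :: 'k::comm_ring_1 tens)"
  unfolding dgen_def chi_def Sg_def tsum_def by (simp only: tmul_mono append.simps)

lemma mid_eval:
  assumes "finite (msupp \<gamma>)"
  shows "tmul (tmul (mono u) (dgen \<gamma>)) (mono v) w =
     (of_bool (\<exists>a b. w = u @ [a, b] @ v \<and> a \<noteq> (\<lambda>_. 0) \<and> b \<noteq> (\<lambda>_. 0) \<and> madd a b = \<gamma>) :: 'k::comm_ring_1)"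
proof -
  have "tmul (tmul (mono u) (dgen \<gamma>)) (mono v) w =
      (\<Sum>\<beta>\<in>Sg \<gamma>. (of_bool (w = u @ [\<beta>, \<lambda>i. \<gamma> i - \<beta> i] @ v) :: 'k))"
    unfolding dgen_expand tmul_tsum_right tmul_tsum_left tmul_mono tsum_eval mono_eval by simp
  also have "\<dots> = of_bool (\<exists>\<beta>\<in>Sg \<gamma>. w = u @ [\<beta>, \<lambda>i. \<gamma> i - \<beta> i] @ v)"
    by (rule sum_of_bool_unique[OF finite_Sg[OF assms]]) simp
  also have "(\<exists>\<beta>\<in>Sg \<gamma>. w = u @ [\<beta>, \<lambda>i. \<gamma> i - \<beta> i] @ v) \<longleftrightarrow>
     (\<exists>a b. w = u @ [a, b] @ v \<and> a \<noteq> (\<lambda>_. 0) \<and> b \<noteq> (\<lambda>_. 0) \<and> madd a b = \<gamma>)"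
  proof
    assume "\<exists>\<beta>\<in>Sg \<gamma>. w = u @ [\<beta>, \<lambda>i. \<gamma> i - \<beta> i] @ v"
    then obtain \<beta> where b: "\<beta> \<in> Sg \<gamma>" "w = u @ [\<beta>, \<lambda>i. \<gamma> i - \<beta> i] @ v" by blast
    have le: "\<forall>i. \<beta> i \<le> \<gamma> i" and nz: "\<beta> \<noteq> (\<lambda>_. 0)" and ne: "\<beta> \<noteq> \<gamma>" using b(1) by (auto simp: Sg_def)
    have "(\<lambda>i. \<gamma> i - \<beta> i) \<noteq> (\<lambda>_. 0)"
    proof
      assume "(\<lambda>i. \<gamma> i - \<beta> i) = (\<lambda>_. 0)"
      then have "\<forall>i. \<gamma> i - \<beta> i = 0" by metis
      then have "\<beta> = \<gamma>"
      proof (intro ext)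
        fix i assume h: "\<forall>i. \<gamma> i - \<beta> i = 0"
        show "\<beta> i = \<gamma> i" using h[rule_format, of i] le[rule_format, of i] by simp
      qed
      with ne show False by simp
    qed
    moreover have "madd \<beta> (\<lambda>i. \<gamma> i - \<beta> i) = \<gamma>" using le by (auto simp: madd_def)
    ultimately show "\<exists>a b. w = u @ [a, b] @ v \<and> a \<noteq> (\<lambda>_. 0) \<and> b \<noteq> (\<lambda>_. 0) \<and> madd a b = \<gamma>"
      using b(2) nz by blast
  next
    assume "\<exists>a b. w = u @ [a, b] @ v \<and> a \<noteq> (\<lambda>_. 0) \<and> b \<noteq> (\<lambda>_. 0) \<and> madd a b = \<gamma>"
    then obtain a b where ab: "w = u @ [a, b] @ v" "a \<noteq> (\<lambda>_. 0)" "b \<noteq> (\<lambda>_. 0)" "madd a b = \<gamma>" by blast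
    have g: "\<And>i. \<gamma> i = a i + b i" using ab(4) by (auto simp: madd_def)
    have "a \<noteq> \<gamma>"
    proof
      assume "a = \<gamma>" then have "\<forall>i. b i = 0" using g by simp
      with ab(3) show False by auto
    qed
    then have "a \<in> Sg \<gamma>" using ab(2) g by (auto simp: Sg_def)
    moreover have "(\<lambda>i. \<gamma> i - a i) = b" using g by auto
    ultimately show "\<exists>\<beta>\<in>Sg \<gamma>. w = u @ [\<beta>, \<lambda>i. \<gamma> i - \<beta> i] @ v" using ab(1) by auto
  qed
  finally show ?thesis .
qed



lemma dd_eq:
  assumes "finite W" "{w. x w \<noteq> 0} \<subseteq> W"
  shows "dd x = tsum (\<lambda>w. tsmul (x w) (dword w)) W"
proof
  fix v
  have "dd x v = (\<Sum>w\<in>{w. x w \<noteq> 0}. x w * dword w v)"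
    by (simp add: dd_def tsum_def tsmul_def)
  also have "\<dots> = (\<Sum>w\<in>W. x w * dword w v)"
    by (rule sum.mono_neutral_left[OF assms(1) assms(2)]) auto
  finally show "dd x v = tsum (\<lambda>w. tsmul (x w) (dword w)) W v"
    by (simp add: tsum_def tsmul_def)
qed

lemma msum_pos:
  assumes "\<alpha> \<noteq> (\<lambda>_. 0)" "finite (msupp \<alpha>)"
  shows "(\<Sum>j\<in>msupp \<alpha>. \<alpha> j) \<ge> 1"
proof -
  obtain i where i: "\<alpha> i \<noteq> 0" using assms(1) by auto
  then have im: "i \<in> msupp \<alpha>" by (simp add: msupp_def)
  have "\<alpha> i \<le> (\<Sum>j\<in>msupp \<alpha>. \<alpha> j)"
    by (rule member_le_sum[OF im]) (use assms(2) in auto)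
  then show ?thesis using i by simp
qed

lemma odd_aux: "(s::nat) \<ge> 1 \<Longrightarrow> odd (2 * s - 1)"
  by presburger

lemma mdeg_odd:
  assumes "\<alpha> \<noteq> (\<lambda>_. 0)" "finite (msupp \<alpha>)"
  shows "odd (mdeg \<alpha>)"
  unfolding mdeg_def by (rule odd_aux[OF msum_pos[OF assms]])

lemma dword_single:
  assumes "finite (msupp \<gamma>)"
  shows "dword [\<gamma>] w = (of_bool (\<exists>a b. w = [a, b] \<and> a \<noteq> (\<lambda>_. 0) \<and> b \<noteq> (\<lambda>_. 0) \<and> madd a b = \<gamma>) :: 'k::comm_ring_1)"
proof -
  have "dword [\<gamma>] w = (tmul (tmul (mono []) (dgen \<gamma>)) (mono []) w :: 'k)"
    by (simp add: dword_def tsum_def tsmul_def)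
  also have "\<dots> = of_bool (\<exists>a b. w = [] @ [a, b] @ [] \<and> a \<noteq> (\<lambda>_. 0) \<and> b \<noteq> (\<lambda>_. 0) \<and> madd a b = \<gamma>)"
    by (rule mid_eval[OF assms])
  finally show ?thesis by simp
qed

lemma dword_pair:
  assumes "finite (msupp p)" "finite (msupp q)" "p \<noteq> (\<lambda>_. 0)"
  shows "dword [p, q] w = (of_bool (\<exists>a b. w = [a, b, q] \<and> a \<noteq> (\<lambda>_. 0) \<and> b \<noteq> (\<lambda>_. 0) \<and> madd a b = p)
      - of_bool (\<exists>a b. w = [p, a, b] \<and> a \<noteq> (\<lambda>_. 0) \<and> b \<noteq> (\<lambda>_. 0) \<and> madd a b = q) :: 'k::comm_ring_1)"
proof -
  have od: "odd (mdeg p)" by (rule mdeg_odd[OF assms(3) assms(1)])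
  have "{..<length [p, q]} = {0, 1}" by auto
  then have "dword [p, q] w = (tmul (tmul (mono []) (dgen p)) (mono [q]) w
        + (-1) ^ (mdeg p) * tmul (tmul (mono [p]) (dgen q)) (mono []) w :: 'k)"
    by (simp add: dword_def tsum_def tsmul_def)
  also have "\<dots> = tmul (tmul (mono []) (dgen p)) (mono [q]) w - tmul (tmul (mono [p]) (dgen q)) (mono []) w"
    using od by simp
  also have "\<dots> = of_bool (\<exists>a b. w = [] @ [a, b] @ [q] \<and> a \<noteq> (\<lambda>_. 0) \<and> b \<noteq> (\<lambda>_. 0) \<and> madd a b = p)
      - of_bool (\<exists>a b. w = [p] @ [a, b] @ [] \<and> a \<noteq> (\<lambda>_. 0) \<and> b \<noteq> (\<lambda>_. 0) \<and> madd a b = q)"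
    by (simp only: mid_eval[OF assms(1)] mid_eval[OF assms(2)])
  finally show ?thesis by simp
qed



lemma dd_quad:
  fixes P :: "(mindex \<times> mindex) set"
  assumes fin: "finite P"
    and good: "\<And>p. p \<in> P \<Longrightarrow> fst p \<noteq> (\<lambda>_. 0) \<and> snd p \<noteq> (\<lambda>_. 0) \<and> finite (msupp (fst p)) \<and> finite (msupp (snd p))"
  shows "dd (tsum (\<lambda>p. mono [fst p, snd p]) P) w =
    (of_bool (\<exists>a b c. w = [a, b, c] \<and> a \<noteq> (\<lambda>_. 0) \<and> b \<noteq> (\<lambda>_. 0) \<and> (madd a b, c) \<in> P)
   - of_bool (\<exists>a b c. w = [a, b, c] \<and> b \<noteq> (\<lambda>_. 0) \<and> c \<noteq> (\<lambda>_. 0) \<and> (a, madd b c) \<in> P) :: 'k::comm_ring_1)"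
proof -
  define f :: "mindex \<times> mindex \<Rightarrow> word" where "f = (\<lambda>p. [fst p, snd p])"
  define y :: "'k tens" where "y = tsum (\<lambda>p. mono (f p)) P"
  have inj: "inj_on f P" by (auto simp: inj_on_def f_def prod_eq_iff)
  have yv: "y v = of_bool (\<exists>p\<in>P. v = f p)" for v
  proof -
    have "y v = (\<Sum>p\<in>P. (of_bool (v = f p) :: 'k))" by (simp add: y_def tsum_eval mono_eval)
    also have "\<dots> = of_bool (\<exists>p\<in>P. v = f p)"
      by (rule sum_of_bool_unique[OF fin]) (use inj in \<open>auto simp: inj_on_def\<close>)
    finally show ?thesis .
  qed
  have supp: "{v. y v \<noteq> 0} \<subseteq> f ` P" using yv by auto
  have "dd y = tsum (\<lambda>v. tsmul (y v) (dword v)) (f ` P)"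
    by (rule dd_eq[OF finite_imageI[OF fin] supp])
  then have "dd y w = (\<Sum>v\<in>f ` P. y v * dword v w)" by (simp add: tsum_def tsmul_def)
  also have "\<dots> = (\<Sum>p\<in>P. y (f p) * dword (f p) w)"
    by (rule sum.reindex[OF inj, unfolded comp_def])
  also have "\<dots> = (\<Sum>p\<in>P. dword (f p) w)"
    by (rule sum.cong) (auto simp: yv)
  also have "\<dots> = (\<Sum>p\<in>P. (of_bool (\<exists>a b. w = [a, b, snd p] \<and> a \<noteq> (\<lambda>_. 0) \<and> b \<noteq> (\<lambda>_. 0) \<and> madd a b = fst p)
      - of_bool (\<exists>a b. w = [fst p, a, b] \<and> a \<noteq> (\<lambda>_. 0) \<and> b \<noteq> (\<lambda>_. 0) \<and> madd a b = snd p) :: 'k))"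
  proof (rule sum.cong)
    fix p assume "p \<in> P"
    from good[OF this] show "dword (f p) w = (of_bool (\<exists>a b. w = [a, b, snd p] \<and> a \<noteq> (\<lambda>_. 0) \<and> b \<noteq> (\<lambda>_. 0) \<and> madd a b = fst p)
      - of_bool (\<exists>a b. w = [fst p, a, b] \<and> a \<noteq> (\<lambda>_. 0) \<and> b \<noteq> (\<lambda>_. 0) \<and> madd a b = snd p) :: 'k)"
      unfolding f_def by (intro dword_pair) auto
  qed simp
  also have "\<dots> = (\<Sum>p\<in>P. (of_bool (\<exists>a b. w = [a, b, snd p] \<and> a \<noteq> (\<lambda>_. 0) \<and> b \<noteq> (\<lambda>_. 0) \<and> madd a b = fst p) :: 'k))
      - (\<Sum>p\<in>P. (of_bool (\<exists>a b. w = [fst p, a, b] \<and> a \<noteq> (\<lambda>_. 0) \<and> b \<noteq> (\<lambda>_. 0) \<and> madd a b = snd p) :: 'k))"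
    by (rule sum_subtractf)
  also have "(\<Sum>p\<in>P. (of_bool (\<exists>a b. w = [a, b, snd p] \<and> a \<noteq> (\<lambda>_. 0) \<and> b \<noteq> (\<lambda>_. 0) \<and> madd a b = fst p) :: 'k))
      = of_bool (\<exists>p\<in>P. \<exists>a b. w = [a, b, snd p] \<and> a \<noteq> (\<lambda>_. 0) \<and> b \<noteq> (\<lambda>_. 0) \<and> madd a b = fst p)"
    by (rule sum_of_bool_unique[OF fin]) (auto simp: prod_eq_iff)
  also have "(\<Sum>p\<in>P. (of_bool (\<exists>a b. w = [fst p, a, b] \<and> a \<noteq> (\<lambda>_. 0) \<and> b \<noteq> (\<lambda>_. 0) \<and> madd a b = snd p) :: 'k))
      = of_bool (\<exists>p\<in>P. \<exists>a b. w = [fst p, a, b] \<and> a \<noteq> (\<lambda>_. 0) \<and> b \<noteq> (\<lambda>_. 0) \<and> madd a b = snd p)"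
    by (rule sum_of_bool_unique[OF fin]) (auto simp: prod_eq_iff)
  also have "(\<exists>p\<in>P. \<exists>a b. w = [a, b, snd p] \<and> a \<noteq> (\<lambda>_. 0) \<and> b \<noteq> (\<lambda>_. 0) \<and> madd a b = fst p)
     \<longleftrightarrow> (\<exists>a b c. w = [a, b, c] \<and> a \<noteq> (\<lambda>_. 0) \<and> b \<noteq> (\<lambda>_. 0) \<and> (madd a b, c) \<in> P)"
    by force
  also have "(\<exists>p\<in>P. \<exists>a b. w = [fst p, a, b] \<and> a \<noteq> (\<lambda>_. 0) \<and> b \<noteq> (\<lambda>_. 0) \<and> madd a b = snd p)
     \<longleftrightarrow> (\<exists>a b c. w = [a, b, c] \<and> b \<noteq> (\<lambda>_. 0) \<and> c \<noteq> (\<lambda>_. 0) \<and> (a, madd b c) \<in> P)"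
    by force
  finally show ?thesis by (simp add: y_def f_def)
qed



abbreviation Z :: mindex where "Z \<equiv> (\<lambda>_. 0)"

lemma madd_eval: "madd a b j = a j + b j" by (simp add: madd_def)

lemma indic_eval: "indic A j = (if j \<in> A then 1 else 0)" by (simp add: indic_def)

lemma msupp_indic[simp]: "msupp (indic A) = A"
  by (auto simp: msupp_def indic_def)

lemma indic_zero_iff: "indic A = Z \<longleftrightarrow> A = {}"
proof
  assume h: "indic A = Z"
  show "A = {}"
  proof (rule ccontr)
    assume "A \<noteq> {}"
    then obtain x where "x \<in> A" by blast
    then have "indic A x = 1" by (simp add: indic_def)
    with h show False by simp
  qed
qed (simp add: indic_def)

lemma indic_inj: "indic A = indic B \<longleftrightarrow> A = B"
  by (metis msupp_indic)

lemma nz_msupp: "a \<noteq> Z \<Longrightarrow> msupp a \<noteq> {}"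
  by (auto simp: msupp_def)

lemma madd_assoc: "madd (madd a b) c = madd a (madd b c)"
  by (simp add: madd_def add.assoc)

lemma madd_comm: "madd a b = madd b a"
  by (simp add: madd_def add.commute)

lemma madd_indic:
  assumes "madd a b = indic S"
  shows "a = indic (msupp a) \<and> b = indic (msupp b) \<and> msupp a \<inter> msupp b = {} \<and> msupp a \<union> msupp b = S"
proof -
  have h: "a j + b j = (if j \<in> S then 1 else 0)" for j
    using fun_cong[OF assms, of j] by (simp add: madd_def indic_def)
  have 1: "a = indic (msupp a)"
  proof
    fix j show "a j = indic (msupp a) j" using h[of j] by (cases "j \<in> S") (auto simp: indic_def msupp_def)
  qed
  have 2: "b = indic (msupp b)"
  proof
    fix j show "b j = indic (msupp b) j" using h[of j] by (cases "j \<in> S") (auto simp: indic_def msupp_def)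
  qed
  have 3: "msupp a \<inter> msupp b = {}"
  proof (rule ccontr)
    assume "msupp a \<inter> msupp b \<noteq> {}"
    then obtain j where "a j \<noteq> 0" "b j \<noteq> 0" by (auto simp: msupp_def)
    then show False using h[of j] by (cases "j \<in> S") auto
  qed
  have 4: "msupp a \<union> msupp b = S"
  proof (rule set_eqI)
    fix j show "j \<in> msupp a \<union> msupp b \<longleftrightarrow> j \<in> S"
      using h[of j] by (cases "j \<in> S") (auto simp: msupp_def)
  qed
  show ?thesis using 1 2 3 4 by blast
qed

lemma madd_indic_set: "A \<inter> B = {} \<Longrightarrow> madd (indic A) (indic B) = indic (A \<union> B)"
  by (auto simp: madd_def indic_def fun_eq_iff)

lemma madd_not_single:
  assumes "a \<noteq> Z" "b \<noteq> Z"
  shows "madd a b \<noteq> indic {i}"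
proof
  assume "madd a b = indic {i}"
  from madd_indic[OF this] have "msupp a \<inter> msupp b = {}" "msupp a \<union> msupp b = {i}" by auto
  moreover have "msupp a \<noteq> {}" "msupp b \<noteq> {}" using nz_msupp assms by auto
  ultimately show False by (metis Int_absorb1 Int_absorb2 subset_singletonD sup.cobounded1 sup.cobounded2)
qed

lemma madd_cancel_right: "madd x c = madd y c \<longleftrightarrow> x = y"
  by (auto simp: madd_def fun_eq_iff)

lemma madd_cancel_left: "madd c x = madd c y \<longleftrightarrow> x = y"
  by (auto simp: madd_def fun_eq_iff)

definition Sp :: "nat set \<Rightarrow> nat set set" where
  "Sp I = {A. A \<subseteq> I \<and> A \<noteq> {} \<and> A \<noteq> I}"

lemma split_iff:
  "(b \<noteq> Z \<and> c \<noteq> Z \<and> madd b c = indic I) \<longleftrightarrow> (\<exists>A\<in>Sp I. b = indic A \<and> c = indic (I - A))"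
proof
  assume h: "b \<noteq> Z \<and> c \<noteq> Z \<and> madd b c = indic I"
  from madd_indic[of b c I] h have m: "b = indic (msupp b)" "c = indic (msupp c)"
    "msupp b \<inter> msupp c = {}" "msupp b \<union> msupp c = I" by auto
  have "msupp c = I - msupp b" using m(3,4) by blast
  moreover have "msupp b \<in> Sp I"
    using m nz_msupp[of b] nz_msupp[of c] h unfolding Sp_def by blast
  ultimately show "\<exists>A\<in>Sp I. b = indic A \<and> c = indic (I - A)" using m by metis
next
  assume "\<exists>A\<in>Sp I. b = indic A \<and> c = indic (I - A)"
  then obtain A where A: "A \<subseteq> I" "A \<noteq> {}" "A \<noteq> I" "b = indic A" "c = indic (I - A)"
    by (auto simp: Sp_def)
  have "I - A \<noteq> {}" using A by blast
  then show "b \<noteq> Z \<and> c \<noteq> Z \<and> madd b c = indic I"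
    using A by (auto simp: indic_zero_iff madd_indic_set Un_absorb1 Un_Diff_cancel)
qed

lemma finite_Sp: "finite I \<Longrightarrow> finite (Sp I)"
  by (rule finite_subset[of _ "Pow I"]) (auto simp: Sp_def)



lemma chiS_mono: "chiS A = mono [indic A]"
  by (simp add: chiS_def chi_def)

lemma quad_eval:
  assumes "finite P"
  shows "tsum (\<lambda>p. mono [fst p, snd p]) P w = (of_bool (\<exists>p\<in>P. w = [fst p, snd p]) :: 'k::comm_ring_1)"
proof -
  have "tsum (\<lambda>p. mono [fst p, snd p]) P w = (\<Sum>p\<in>P. (of_bool (w = [fst p, snd p]) :: 'k))"
    by (simp add: tsum_eval mono_eval)
  also have "\<dots> = of_bool (\<exists>p\<in>P. w = [fst p, snd p])"
    by (rule sum_of_bool_unique[OF assms]) (auto simp: prod_eq_iff)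
  finally show ?thesis .
qed

lemma quad_alg:
  assumes "finite P" "\<And>p. p \<in> P \<Longrightarrow> valid_gen K (fst p) \<and> valid_gen K (snd p)"
  shows "(tsum (\<lambda>p. mono [fst p, snd p]) P :: 'k::comm_ring_1 tens) \<in> alg K"
proof -
  let ?y = "tsum (\<lambda>p. mono [fst p, snd p]) P :: 'k tens"
  have s: "{w. ?y w \<noteq> 0} \<subseteq> (\<lambda>p. [fst p, snd p]) ` P"
  proof
    fix w assume "w \<in> {w. ?y w \<noteq> 0}"
    moreover have "?y w = (of_bool (\<exists>p\<in>P. w = [fst p, snd p]) :: 'k)"
      by (rule quad_eval[OF assms(1)])
    ultimately have "(of_bool (\<exists>p\<in>P. w = [fst p, snd p]) :: 'k) \<noteq> 0" by simp
    then have "\<exists>p\<in>P. w = [fst p, snd p]" by (cases "\<exists>p\<in>P. w = [fst p, snd p]") auto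
    then show "w \<in> (\<lambda>p. [fst p, snd p]) ` P" by auto
  qed
  have "finite {w. ?y w \<noteq> 0}" by (rule finite_subset[OF s finite_imageI[OF assms(1)]])
  moreover have "\<forall>w. ?y w \<noteq> 0 \<longrightarrow> (\<forall>\<alpha>\<in>set w. valid_gen K \<alpha>)"
  proof (intro allI impI)
    fix w assume "?y w \<noteq> 0"
    then obtain p where "p \<in> P" "w = [fst p, snd p]" using s by blast
    then show "\<forall>\<alpha>\<in>set w. valid_gen K \<alpha>" using assms(2) by auto
  qed
  ultimately show ?thesis by (simp add: alg_def)
qed

lemma single_alg:
  assumes "valid_gen K \<gamma>"
  shows "(tsmul c (mono [\<gamma>]) :: 'k::comm_ring_1 tens) \<in> alg K"
proof -
  have s: "{w. (tsmul c (mono [\<gamma>]) :: 'k tens) w \<noteq> 0} \<subseteq> {[\<gamma>]}"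
    by (auto simp: tsmul_def mono_def)
  then have "finite {w. (tsmul c (mono [\<gamma>]) :: 'k tens) w \<noteq> 0}" by (rule finite_subset) simp
  moreover have "\<forall>w. (tsmul c (mono [\<gamma>]) :: 'k tens) w \<noteq> 0 \<longrightarrow> (\<forall>\<alpha>\<in>set w. valid_gen K \<alpha>)"
    using s assms by auto
  ultimately show ?thesis by (simp add: alg_def)
qed

lemma dd_single:
  "dd (tsmul c (mono [\<gamma>])) v = (c * dword [\<gamma>] v :: 'k::comm_ring_1)"
proof -
  have s: "{w. (tsmul c (mono [\<gamma>]) :: 'k tens) w \<noteq> 0} \<subseteq> {[\<gamma>]}"
    by (auto simp: tsmul_def mono_def)
  have "dd (tsmul c (mono [\<gamma>])) = tsum (\<lambda>w. tsmul ((tsmul c (mono [\<gamma>]) :: 'k tens) w) (dword w)) {[\<gamma>]}"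
    by (rule dd_eq[OF _ s]) simp
  then show ?thesis by (simp add: tsum_def tsmul_def mono_def)
qed

lemma psi_expand: "psi I = tsum (\<lambda>A. mono [indic A, indic (I - A)]) (Sp I)"
  unfolding psi_def Sp_def chiS_mono by (simp add: tmul_mono)

lemma gcomm_eval:
  assumes "finite I" "even q"
  shows "gcomm (chiS {i}) 1 (psi I) q w =
    (of_bool (\<exists>a b c. w = [a, b, c] \<and> a = indic {i} \<and> b \<noteq> Z \<and> c \<noteq> Z \<and> madd b c = indic I)
   - of_bool (\<exists>a b c. w = [a, b, c] \<and> c = indic {i} \<and> a \<noteq> Z \<and> b \<noteq> Z \<and> madd a b = indic I) :: 'k::comm_ring_1)"
proof -
  let ?e = "indic {i}"
  have sg: "((-1::'k) ^ (1 * q)) = 1" using assms(2) by simp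
  have l: "tmul (chiS {i}) (psi I) w = (\<Sum>A\<in>Sp I. (of_bool (w = [?e, indic A, indic (I - A)]) :: 'k))"
    by (simp add: chiS_mono psi_expand tmul_tsum_right tmul_mono tsum_eval mono_eval)
  have r: "tmul (psi I) (chiS {i}) w = (\<Sum>A\<in>Sp I. (of_bool (w = [indic A, indic (I - A), ?e]) :: 'k))"
    by (simp add: chiS_mono psi_expand tmul_tsum_left tmul_mono tsum_eval mono_eval)
  have l2: "(\<Sum>A\<in>Sp I. (of_bool (w = [?e, indic A, indic (I - A)]) :: 'k)) = of_bool (\<exists>A\<in>Sp I. w = [?e, indic A, indic (I - A)])"
    by (rule sum_of_bool_unique[OF finite_Sp[OF assms(1)]]) (auto simp: indic_inj)
  have r2: "(\<Sum>A\<in>Sp I. (of_bool (w = [indic A, indic (I - A), ?e]) :: 'k)) = of_bool (\<exists>A\<in>Sp I. w = [indic A, indic (I - A), ?e])"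
    by (rule sum_of_bool_unique[OF finite_Sp[OF assms(1)]]) (auto simp: indic_inj)
  have l3: "(\<exists>A\<in>Sp I. w = [?e, indic A, indic (I - A)]) \<longleftrightarrow>
      (\<exists>a b c. w = [a, b, c] \<and> a = ?e \<and> b \<noteq> Z \<and> c \<noteq> Z \<and> madd b c = indic I)"
    using split_iff by blast
  have r3: "(\<exists>A\<in>Sp I. w = [indic A, indic (I - A), ?e]) \<longleftrightarrow>
      (\<exists>a b c. w = [a, b, c] \<and> c = ?e \<and> a \<noteq> Z \<and> b \<noteq> Z \<and> madd a b = indic I)"
    using split_iff by blast
  show ?thesis
    unfolding gcomm_def tsub_def tsmul_def sg using l r l2 r2 l3 r3 by simp
qed



lemma double_iff:
  "(a \<noteq> Z \<and> b \<noteq> Z \<and> madd a b = madd (indic {i}) (indic {i})) \<longleftrightarrow> (a = indic {i} \<and> b = indic {i})"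
proof
  assume h: "a \<noteq> Z \<and> b \<noteq> Z \<and> madd a b = madd (indic {i}) (indic {i})"
  have s: "a j + b j = (if j = i then 2 else 0)" for j
    using fun_cong[OF conjunct2[OF conjunct2[OF h]], of j] by (simp add: madd_def indic_def)
  obtain j0 where j0: "a j0 \<noteq> 0" using h by auto
  then have "j0 = i" using s[of j0] by (cases "j0 = i") auto
  then have ai: "a i \<ge> 1" using j0 by simp
  obtain j1 where j1: "b j1 \<noteq> 0" using h by auto
  then have "j1 = i" using s[of j1] by (cases "j1 = i") auto
  then have bi: "b i \<ge> 1" using j1 by simp
  have "a i = 1" "b i = 1" using s[of i] ai bi by auto
  moreover have "a j = indic {i} j" "b j = indic {i} j" if "j \<noteq> i" for j
    using s[of j] that by (auto simp: indic_def)
  ultimately have "a = indic {i}" "b = indic {i}"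
    by (auto simp: indic_def fun_eq_iff)
  then show "a = indic {i} \<and> b = indic {i}" by simp
next
  assume "a = indic {i} \<and> b = indic {i}"
  then show "a \<noteq> Z \<and> b \<noteq> Z \<and> madd a b = madd (indic {i}) (indic {i})"
    by (simp add: indic_zero_iff)
qed

lemma msupp_double: "msupp (madd (indic {i}) (indic {i})) = {i}"
  by (auto simp: msupp_def madd_def indic_def)

lemma part1:
  assumes "{i} \<in> K"
  shows "is_boundary K (tmul (chiS {i}) (chiS {i}) :: ('k::comm_ring_1) tens)"
proof -
  let ?e = "indic {i}"
  let ?g = "madd ?e ?e"
  have vg: "valid_gen K ?g"
    using assms msupp_double[of i] by (auto simp: valid_gen_def msupp_def)
  have fin: "finite (msupp ?g)" by (simp add: msupp_double)
  have "dd (tsmul 1 (mono [?g])) = (tmul (chiS {i}) (chiS {i}) :: 'k tens)"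
  proof
    fix v
    have "dd (tsmul 1 (mono [?g])) v = (dword [?g] v :: 'k)" by (simp add: dd_single)
    also have "\<dots> = of_bool (\<exists>a b. v = [a, b] \<and> a \<noteq> Z \<and> b \<noteq> Z \<and> madd a b = ?g)"
      by (rule dword_single[OF fin])
    also have "(\<exists>a b. v = [a, b] \<and> a \<noteq> Z \<and> b \<noteq> Z \<and> madd a b = ?g) \<longleftrightarrow> v = [?e, ?e]"
      using double_iff[of _ _ i] by blast
    also have "(of_bool (v = [?e, ?e]) :: 'k) = tmul (chiS {i}) (chiS {i}) v"
      by (simp add: chiS_mono tmul_mono mono_eval)
    finally show "dd (tsmul 1 (mono [?g])) v = (tmul (chiS {i}) (chiS {i}) v :: 'k)" .
  qed
  then show ?thesis unfolding is_boundary_def using single_alg[OF vg] by blast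
qed

lemma sub_pair: "A \<subseteq> {i, j} \<Longrightarrow> A = {} \<or> A = {i} \<or> A = {j} \<or> A = {i, j}"
  by (cases "i \<in> A"; cases "j \<in> A") blast+

lemma Sp_pair:
  assumes "i \<noteq> j"
  shows "Sp {i, j} = {{i}, {j}}"
proof (rule set_eqI)
  fix A
  show "A \<in> Sp {i, j} \<longleftrightarrow> A \<in> {{i}, {j}}"
  proof
    assume "A \<in> Sp {i, j}"
    then have "A \<subseteq> {i, j}" "A \<noteq> {}" "A \<noteq> {i, j}" by (auto simp: Sp_def)
    then show "A \<in> {{i}, {j}}" using sub_pair[of A i j] by blast
  next
    assume "A \<in> {{i}, {j}}"
    moreover have "{i} \<noteq> {i, j}" "{j} \<noteq> {i, j}" using assms by auto
    ultimately show "A \<in> Sp {i, j}" by (auto simp: Sp_def)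
  qed
qed

lemma pair_aux:
  assumes "i \<noteq> j"
  shows "(\<exists>a b. v = [a, b] \<and> (\<exists>A\<in>Sp {i, j}. a = indic A \<and> b = indic ({i, j} - A)))
     \<longleftrightarrow> v = [indic {i}, indic {j}] \<or> v = [indic {j}, indic {i}]"
proof -
  have d: "{i, j} - {i} = {j}" "{i, j} - {j} = {i}" using assms by auto
  show ?thesis unfolding Sp_pair[OF assms] using d by auto
qed

lemma part2:
  assumes "{i, j} \<in> K"
  shows "is_boundary K (gcomm (chiS {i} :: ('k::comm_ring_1) tens) 1 (chiS {j}) 1)"
proof (cases "i = j")
  case True
  let ?e = "indic {i}"
  let ?g = "madd ?e ?e"
  have vg: "valid_gen K ?g"
    using assms True msupp_double[of i] by (auto simp: valid_gen_def msupp_def)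
  have fin: "finite (msupp ?g)" by (simp add: msupp_double)
  have "dd (tsmul 2 (mono [?g])) = (gcomm (chiS {i} :: 'k tens) 1 (chiS {j}) 1)"
  proof
    fix v
    have "dd (tsmul 2 (mono [?g])) v = (2 * dword [?g] v :: 'k)" by (simp add: dd_single)
    also have "dword [?g] v = (of_bool (\<exists>a b. v = [a, b] \<and> a \<noteq> Z \<and> b \<noteq> Z \<and> madd a b = ?g) :: 'k)"
      by (rule dword_single[OF fin])
    also have "(\<exists>a b. v = [a, b] \<and> a \<noteq> Z \<and> b \<noteq> Z \<and> madd a b = ?g) \<longleftrightarrow> v = [?e, ?e]"
      using double_iff[of _ _ i] by blast
    also have "2 * (of_bool (v = [?e, ?e]) :: 'k) = gcomm (chiS {i}) 1 (chiS {j}) 1 v"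
      using True by (simp add: gcomm_def tsub_def tsmul_def chiS_mono tmul_mono mono_eval)
    finally show "dd (tsmul 2 (mono [?g])) v = (gcomm (chiS {i} :: 'k tens) 1 (chiS {j}) 1 v)" .
  qed
  then show ?thesis unfolding is_boundary_def using single_alg[OF vg] by blast
next
  case False
  let ?g = "indic {i, j}"
  have vg: "valid_gen K ?g"
    using assms by (auto simp: valid_gen_def indic_zero_iff)
  have fin: "finite (msupp ?g)" by simp
  have ne: "indic {i} \<noteq> indic {j}" using False by (simp add: indic_inj)
  have "dd (tsmul 1 (mono [?g])) = (gcomm (chiS {i} :: 'k tens) 1 (chiS {j}) 1)"
  proof
    fix v
    have "dd (tsmul 1 (mono [?g])) v = (dword [?g] v :: 'k)" by (simp add: dd_single)
    also have "\<dots> = of_bool (\<exists>a b. v = [a, b] \<and> a \<noteq> Z \<and> b \<noteq> Z \<and> madd a b = ?g)"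
      by (rule dword_single[OF fin])
    also have "(\<exists>a b. v = [a, b] \<and> a \<noteq> Z \<and> b \<noteq> Z \<and> madd a b = ?g) \<longleftrightarrow>
        (\<exists>a b. v = [a, b] \<and> (\<exists>A\<in>Sp {i, j}. a = indic A \<and> b = indic ({i, j} - A)))"
      by (simp only: split_iff)
    also have "\<dots> \<longleftrightarrow> v = [indic {i}, indic {j}] \<or> v = [indic {j}, indic {i}]"
      by (rule pair_aux[OF False])
    also have "(of_bool (v = [indic {i}, indic {j}] \<or> v = [indic {j}, indic {i}]) :: 'k)
        = gcomm (chiS {i}) 1 (chiS {j}) 1 v"
      using ne by (simp add: gcomm_def tsub_def tsmul_def chiS_mono tmul_mono mono_eval)
    finally show "dd (tsmul 1 (mono [?g])) v = (gcomm (chiS {i} :: 'k tens) 1 (chiS {j}) 1 v)" .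
  qed
  then show ?thesis unfolding is_boundary_def using single_alg[OF vg] by blast
qed



lemma below_madd: "madd p q = g \<Longrightarrow> (\<forall>j. p j \<le> g j) \<and> (\<forall>j. q j \<le> g j)"
  by (auto simp: madd_def)

lemma msupp_below:
  assumes "\<forall>j. p j \<le> g j" shows "msupp p \<subseteq> msupp g"
proof
  fix x assume "x \<in> msupp p"
  then have "p x \<noteq> 0" by (simp add: msupp_def)
  moreover have "p x \<le> g x" using assms by simp
  ultimately show "x \<in> msupp g" by (simp add: msupp_def)
qed

lemma madd_nz1: "a \<noteq> Z \<Longrightarrow> madd a b \<noteq> Z"
  by (auto simp: madd_def fun_eq_iff)

lemma madd_nz2: "b \<noteq> Z \<Longrightarrow> madd a b \<noteq> Z"
  by (auto simp: madd_def fun_eq_iff)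

lemma bool_ring:
  "(of_bool (N \<and> \<not> Y2) - of_bool (N \<and> \<not> Y1) :: 'k::comm_ring_1) = of_bool (N \<and> Y1) - of_bool (N \<and> Y2)"
  by (cases N; cases Y1; cases Y2) simp_all

lemma msupp_g3: "i \<in> I \<Longrightarrow> msupp (madd (indic I) (indic {i})) = I"
  by (auto simp: msupp_def madd_def indic_def)

lemma full_supp:
  assumes iI: "i \<in> I" and h: "madd p q = madd (indic I) (indic {i})" and pz: "p \<noteq> Z" and qz: "q \<noteq> Z"
    and sp: "msupp p = I"
  shows "p = indic I \<and> q = indic {i}"
proof -
  have s: "p j + q j = (if j \<in> I then 1 else 0) + (if j = i then 1 else 0)" for j
    using fun_cong[OF h, of j] by (simp add: madd_def indic_def)
  have pI: "p j \<ge> 1" if "j \<in> I" for j using sp that by (auto simp: msupp_def)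
  have out: "p j = 0 \<and> q j = 0" if "j \<notin> I" for j
    using s[of j] that iI by (cases "j = i") auto
  have mid: "p j = 1 \<and> q j = 0" if "j \<in> I" "j \<noteq> i" for j
    using s[of j] that pI[OF that(1)] by auto
  obtain j1 where j1: "q j1 \<noteq> 0" using qz by auto
  have "j1 = i"
  proof (rule ccontr)
    assume "j1 \<noteq> i"
    then show False using j1 out[of j1] mid[of j1] by (cases "j1 \<in> I") auto
  qed
  then have qi: "q i \<ge> 1" using j1 by simp
  have "p i = 1 \<and> q i = 1" using s[of i] iI pI[OF iI] qi by auto
  then have "p = indic I" "q = indic {i}"
    using out mid by (auto simp: indic_def fun_eq_iff)
  then show ?thesis by simp
qed



lemma part3:
  assumes MF: "I \<in> MF m K" and iI: "i \<in> I"
  shows "is_boundary K (gcomm (chiS {i} :: ('k::comm_ring_1) tens) 1 (psi I) (2 * card I - 2))"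
proof -
  have Isub: "I \<subseteq> {1..m}" using MF by (simp add: MF_def)
  have finI: "finite I" by (rule finite_subset[OF Isub]) simp
  have subK: "J \<in> K" if "J \<subset> I" for J using MF that by (simp add: MF_def)
  define e where "e = indic {i}"
  define g where "g = madd (indic I) e"
  define P where "P = {p. fst p \<noteq> Z \<and> snd p \<noteq> Z \<and> madd (fst p) (snd p) = g
      \<and> p \<noteq> (indic I, e) \<and> p \<noteq> (e, indic I)}"
  have mg: "msupp g = I" unfolding g_def e_def by (rule msupp_g3[OF iI])
  have finP: "finite P"
  proof (rule finite_subset)
    show "P \<subseteq> {\<beta>. \<forall>j. \<beta> j \<le> g j} \<times> {\<beta>. \<forall>j. \<beta> j \<le> g j}"
      unfolding P_def using below_madd by fastforce
    show "finite ({\<beta>. \<forall>j. \<beta> j \<le> g j} \<times> {\<beta>. \<forall>j. \<beta> j \<le> g j})"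
      using finite_below[of g] mg finI by simp
  qed
  have suppP: "msupp (fst p) \<subseteq> I \<and> msupp (snd p) \<subseteq> I" if "p \<in> P" for p
    using that below_madd[of "fst p" "snd p" g] msupp_below mg unfolding P_def by blast
  have goodP: "fst p \<noteq> Z \<and> snd p \<noteq> Z \<and> finite (msupp (fst p)) \<and> finite (msupp (snd p))" if "p \<in> P" for p
    using that suppP[OF that] finI finite_subset unfolding P_def by blast
  have validP: "valid_gen K (fst p) \<and> valid_gen K (snd p)" if pP: "p \<in> P" for p
  proof -
    have h: "fst p \<noteq> Z" "snd p \<noteq> Z" "madd (fst p) (snd p) = madd (indic I) (indic {i})"
      "p \<noteq> (indic I, e)" "p \<noteq> (e, indic I)" using pP unfolding P_def g_def e_def by auto
    have "msupp (fst p) \<noteq> I"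
    proof
      assume "msupp (fst p) = I"
      from full_supp[OF iI h(3) h(1) h(2) this] h(4) show False by (auto simp: e_def prod_eq_iff)
    qed
    moreover have "msupp (snd p) \<noteq> I"
    proof
      assume "msupp (snd p) = I"
      from full_supp[OF iI _ h(2) h(1) this] h(3) h(5) show False
        by (auto simp: e_def prod_eq_iff madd_comm)
    qed
    ultimately show ?thesis using suppP[OF pP] subK h(1,2) by (auto simp: valid_gen_def)
  qed
  have ev: "even (2 * card I - 2)" by simp
  have ez: "e \<noteq> Z" by (simp add: e_def indic_zero_iff)
  have "dd (tsum (\<lambda>p. mono [fst p, snd p]) P) = (gcomm (chiS {i} :: 'k tens) 1 (psi I) (2 * card I - 2))"
  proof
    fix w
    have L: "dd (tsum (\<lambda>p. mono [fst p, snd p]) P) w =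
      (of_bool (\<exists>a b c. w = [a, b, c] \<and> a \<noteq> Z \<and> b \<noteq> Z \<and> (madd a b, c) \<in> P)
          - of_bool (\<exists>a b c. w = [a, b, c] \<and> b \<noteq> Z \<and> c \<noteq> Z \<and> (a, madd b c) \<in> P) :: 'k)"
      by (rule dd_quad[OF finP goodP])
    have R: "(gcomm (chiS {i} :: 'k tens) 1 (psi I) (2 * card I - 2)) w =
        of_bool (\<exists>a b c. w = [a, b, c] \<and> a = e \<and> b \<noteq> Z \<and> c \<noteq> Z \<and> madd b c = indic I)
          - of_bool (\<exists>a b c. w = [a, b, c] \<and> c = e \<and> a \<noteq> Z \<and> b \<noteq> Z \<and> madd a b = indic I)"
      unfolding e_def by (rule gcomm_eval[OF finI ev])
    have "(of_bool (\<exists>a b c. w = [a, b, c] \<and> a \<noteq> Z \<and> b \<noteq> Z \<and> (madd a b, c) \<in> P)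
          - of_bool (\<exists>a b c. w = [a, b, c] \<and> b \<noteq> Z \<and> c \<noteq> Z \<and> (a, madd b c) \<in> P) :: 'k) =
        of_bool (\<exists>a b c. w = [a, b, c] \<and> a = e \<and> b \<noteq> Z \<and> c \<noteq> Z \<and> madd b c = indic I)
          - of_bool (\<exists>a b c. w = [a, b, c] \<and> c = e \<and> a \<noteq> Z \<and> b \<noteq> Z \<and> madd a b = indic I)"
    proof (cases "\<exists>a b c. w = [a, b, c]")
      case False
      then show "(of_bool (\<exists>a b c. w = [a, b, c] \<and> a \<noteq> Z \<and> b \<noteq> Z \<and> (madd a b, c) \<in> P)
          - of_bool (\<exists>a b c. w = [a, b, c] \<and> b \<noteq> Z \<and> c \<noteq> Z \<and> (a, madd b c) \<in> P) :: 'k) =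
        of_bool (\<exists>a b c. w = [a, b, c] \<and> a = e \<and> b \<noteq> Z \<and> c \<noteq> Z \<and> madd b c = indic I)
          - of_bool (\<exists>a b c. w = [a, b, c] \<and> c = e \<and> a \<noteq> Z \<and> b \<noteq> Z \<and> madd a b = indic I)"
        by simp
    next
      case True
      then obtain a b c where w: "w = [a, b, c]" by blast
      define N where "N = (a \<noteq> Z \<and> b \<noteq> Z \<and> c \<noteq> Z \<and> madd (madd a b) c = g)"
      have F1: "(a \<noteq> Z \<and> b \<noteq> Z \<and> (madd a b, c) \<in> P) \<longleftrightarrow> N \<and> \<not> (madd a b = indic I \<and> c = e)"
        unfolding P_def N_def e_def using madd_nz1[of a b] madd_not_single[of a b i] by auto
      have F2: "(b \<noteq> Z \<and> c \<noteq> Z \<and> (a, madd b c) \<in> P) \<longleftrightarrow> N \<and> \<not> (a = e \<and> madd b c = indic I)"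
        unfolding P_def N_def e_def using madd_nz1[of b c] madd_not_single[of b c i] madd_assoc[of a b c] by auto
      have F3: "(a = e \<and> b \<noteq> Z \<and> c \<noteq> Z \<and> madd b c = indic I) \<longleftrightarrow> N \<and> (a = e \<and> madd b c = indic I)"
        unfolding N_def g_def using ez madd_assoc[of a b c] madd_comm[of e "indic I"] by auto
      have F4: "(c = e \<and> a \<noteq> Z \<and> b \<noteq> Z \<and> madd a b = indic I) \<longleftrightarrow> N \<and> (madd a b = indic I \<and> c = e)"
        unfolding N_def g_def using ez by auto
      show "(of_bool (\<exists>a b c. w = [a, b, c] \<and> a \<noteq> Z \<and> b \<noteq> Z \<and> (madd a b, c) \<in> P)
          - of_bool (\<exists>a b c. w = [a, b, c] \<and> b \<noteq> Z \<and> c \<noteq> Z \<and> (a, madd b c) \<in> P) :: 'k) =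
        of_bool (\<exists>a b c. w = [a, b, c] \<and> a = e \<and> b \<noteq> Z \<and> c \<noteq> Z \<and> madd b c = indic I)
          - of_bool (\<exists>a b c. w = [a, b, c] \<and> c = e \<and> a \<noteq> Z \<and> b \<noteq> Z \<and> madd a b = indic I)"
      proof -
        have ex: "\<And>R. (\<exists>aa ba ca. [a, b, c] = [aa, ba, ca] \<and> R aa ba ca) \<longleftrightarrow> R a b c" by auto
        show ?thesis unfolding w ex F1 F2 F3 F4 by (rule bool_ring)
      qed
    qed
    then show "dd (tsum (\<lambda>p. mono [fst p, snd p]) P) w = (gcomm (chiS {i} :: 'k tens) 1 (psi I) (2 * card I - 2)) w"
      by (subst L, subst R)
  qed
  moreover have "(tsum (\<lambda>p. mono [fst p, snd p]) P :: 'k tens) \<in> alg K"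
    by (rule quad_alg[OF finP validP])
  ultimately show ?thesis unfolding is_boundary_def by blast
qed



lemma amf_key:
  assumes finL: "finite L" and small: "\<And>J. J \<subseteq> L \<Longrightarrow> card J + 2 \<le> card L \<Longrightarrow> J \<in> K"
    and az: "a \<noteq> Z" and bz: "b \<noteq> Z" and cz: "c \<noteq> Z" and h: "madd (madd a b) c = indic L"
  shows "(msupp (madd a b) \<in> K \<and> msupp c \<in> K) \<longleftrightarrow> \<not> (\<exists>i\<in>{i \<in> L. L - {i} \<notin> K}. c = indic {i})"
proof -
  define X where "X = madd a b"
  from madd_indic[OF h[folded X_def]] have m1: "X = indic (msupp X)" "c = indic (msupp c)"
    "msupp X \<inter> msupp c = {}" "msupp X \<union> msupp c = L" by auto
  from madd_indic[of a b "msupp X"] m1(1) X_def have m2: "msupp a \<inter> msupp b = {}" "msupp a \<union> msupp b = msupp X"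
    by auto
  have ne: "msupp a \<noteq> {}" "msupp b \<noteq> {}" "msupp c \<noteq> {}" using nz_msupp az bz cz by auto
  have fX: "finite (msupp X)" and fc: "finite (msupp c)" using m1(4) finL by (auto intro: finite_subset)
  have fa: "finite (msupp a)" and fb: "finite (msupp b)" using m2(2) fX by (auto intro: finite_subset)
  have ca: "card (msupp a) \<ge> 1" using ne(1) fa by (simp add: Suc_le_eq card_gt_0_iff)
  have cb: "card (msupp b) \<ge> 1" using ne(2) fb by (simp add: Suc_le_eq card_gt_0_iff)
  have cc: "card (msupp c) \<ge> 1" using ne(3) fc by (simp add: Suc_le_eq card_gt_0_iff)
  have cX: "card (msupp X) = card (msupp a) + card (msupp b)"
    using card_Un_disjoint[OF fa fb m2(1)] m2(2) by simp
  have cL: "card L = card (msupp X) + card (msupp c)"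
    using card_Un_disjoint[OF fX fc m1(3)] m1(4) by simp
  have cK: "msupp c \<in> K" using small[of "msupp c"] m1(4) cL cX ca cb by auto
  have XL: "msupp X = L - msupp c" using m1(3,4) by blast
  show ?thesis
  proof
    assume "msupp (madd a b) \<in> K \<and> msupp c \<in> K"
    then have XK: "msupp X \<in> K" by (simp add: X_def)
    show "\<not> (\<exists>i\<in>{i \<in> L. L - {i} \<notin> K}. c = indic {i})"
    proof
      assume "\<exists>i\<in>{i \<in> L. L - {i} \<notin> K}. c = indic {i}"
      then obtain i where "L - {i} \<notin> K" "c = indic {i}" by blast
      then have "msupp X \<notin> K" using XL by simp
      with XK show False by simp
    qed
  next
    assume nex: "\<not> (\<exists>i\<in>{i \<in> L. L - {i} \<notin> K}. c = indic {i})"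
    have "msupp X \<in> K"
    proof (cases "card (msupp c) \<ge> 2")
      case True
      then show ?thesis using small[of "msupp X"] m1(4) cL by auto
    next
      case False
      then have "card (msupp c) = 1" using cc by simp
      then obtain i where ci: "msupp c = {i}" by (rule card_1_singletonE)
      then have iL: "i \<in> L" using m1(4) by blast
      have "c = indic {i}" using m1(2) ci by simp
      then have "L - {i} \<in> K" using nex iL by blast
      then show ?thesis using XL ci by simp
    qed
    then show "msupp (madd a b) \<in> K \<and> msupp c \<in> K" using cK by (simp add: X_def)
  qed
qed

lemma indic_remove: "i \<in> L \<Longrightarrow> madd (indic (L - {i})) (indic {i}) = indic L"
  by (auto simp: madd_def indic_def fun_eq_iff)



lemma part4:
  assumes AMF: "L \<in> AMF m K"
  shows "is_boundary K (tsum (\<lambda>i. gcomm (chiS {i} :: ('k::comm_ring_1) tens) 1 (psi (L - {i})) (2 * card (L - {i}) - 2))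
                              {i \<in> L. L - {i} \<notin> K})"
proof -
  define T where "T = {i \<in> L. L - {i} \<notin> K}"
  have Lsub: "L \<subseteq> {1..m}" using AMF by (simp add: AMF_def)
  have finL: "finite L" by (rule finite_subset[OF Lsub]) simp
  have small: "J \<in> K" if "J \<subseteq> L" "card J + 2 \<le> card L" for J
  proof -
    have "int (card J) \<le> int (card L) - 2" using that(2) by simp
    then show ?thesis using AMF that(1) by (simp add: AMF_def)
  qed
  have finT: "finite T" unfolding T_def using finL by simp
  define P where "P = {p. fst p \<noteq> Z \<and> snd p \<noteq> Z \<and> madd (fst p) (snd p) = indic L
      \<and> msupp (fst p) \<in> K \<and> msupp (snd p) \<in> K}"
  have finP: "finite P"
  proof (rule finite_subset)
    show "P \<subseteq> {\<beta>. \<forall>j. \<beta> j \<le> indic L j} \<times> {\<beta>. \<forall>j. \<beta> j \<le> indic L j}"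
      unfolding P_def using below_madd by fastforce
    show "finite ({\<beta>. \<forall>j. \<beta> j \<le> indic L j} \<times> {\<beta>. \<forall>j. \<beta> j \<le> indic L j})"
      using finite_below[of "indic L"] finL by simp
  qed
  have suppP: "msupp (fst p) \<subseteq> L \<and> msupp (snd p) \<subseteq> L" if "p \<in> P" for p
    using that below_madd[of "fst p" "snd p" "indic L"] msupp_below[of _ "indic L"] unfolding P_def by auto
  have goodP: "fst p \<noteq> Z \<and> snd p \<noteq> Z \<and> finite (msupp (fst p)) \<and> finite (msupp (snd p))" if "p \<in> P" for p
    using that suppP[OF that] finL finite_subset unfolding P_def by blast
  have validP: "valid_gen K (fst p) \<and> valid_gen K (snd p)" if "p \<in> P" for p
    using that unfolding P_def valid_gen_def by auto
  have "dd (tsum (\<lambda>p. mono [fst p, snd p]) P) =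
     (tsum (\<lambda>i. gcomm (chiS {i} :: 'k tens) 1 (psi (L - {i})) (2 * card (L - {i}) - 2)) T)"
  proof
    fix w
    have Lw: "dd (tsum (\<lambda>p. mono [fst p, snd p]) P) w =
      (of_bool (\<exists>a b c. w = [a, b, c] \<and> a \<noteq> Z \<and> b \<noteq> Z \<and> (madd a b, c) \<in> P)
          - of_bool (\<exists>a b c. w = [a, b, c] \<and> b \<noteq> Z \<and> c \<noteq> Z \<and> (a, madd b c) \<in> P) :: 'k)"
      by (rule dd_quad[OF finP goodP])
    have "tsum (\<lambda>i. gcomm (chiS {i} :: 'k tens) 1 (psi (L - {i})) (2 * card (L - {i}) - 2)) T w
      = (\<Sum>i\<in>T. (of_bool (\<exists>a b c. w = [a, b, c] \<and> a = indic {i} \<and> b \<noteq> Z \<and> c \<noteq> Z \<and> madd b c = indic (L - {i}))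
          - of_bool (\<exists>a b c. w = [a, b, c] \<and> c = indic {i} \<and> a \<noteq> Z \<and> b \<noteq> Z \<and> madd a b = indic (L - {i})) :: 'k))"
      unfolding tsum_eval
    proof (rule sum.cong)
      fix i assume "i \<in> T"
      have fi: "finite (L - {i})" using finL by simp
      have ev: "even (2 * card (L - {i}) - 2)" by simp
      show "gcomm (chiS {i} :: 'k tens) 1 (psi (L - {i})) (2 * card (L - {i}) - 2) w =
         (of_bool (\<exists>a b c. w = [a, b, c] \<and> a = indic {i} \<and> b \<noteq> Z \<and> c \<noteq> Z \<and> madd b c = indic (L - {i}))
          - of_bool (\<exists>a b c. w = [a, b, c] \<and> c = indic {i} \<and> a \<noteq> Z \<and> b \<noteq> Z \<and> madd a b = indic (L - {i})) :: 'k)"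
        by (rule gcomm_eval[OF fi ev])
    qed simp
    also have "\<dots> = (\<Sum>i\<in>T. (of_bool (\<exists>a b c. w = [a, b, c] \<and> a = indic {i} \<and> b \<noteq> Z \<and> c \<noteq> Z \<and> madd b c = indic (L - {i})) :: 'k))
          - (\<Sum>i\<in>T. (of_bool (\<exists>a b c. w = [a, b, c] \<and> c = indic {i} \<and> a \<noteq> Z \<and> b \<noteq> Z \<and> madd a b = indic (L - {i})) :: 'k))"
      by (rule sum_subtractf)
    also have "(\<Sum>i\<in>T. (of_bool (\<exists>a b c. w = [a, b, c] \<and> a = indic {i} \<and> b \<noteq> Z \<and> c \<noteq> Z \<and> madd b c = indic (L - {i})) :: 'k))
        = of_bool (\<exists>i\<in>T. \<exists>a b c. w = [a, b, c] \<and> a = indic {i} \<and> b \<noteq> Z \<and> c \<noteq> Z \<and> madd b c = indic (L - {i}))"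
      by (rule sum_of_bool_unique[OF finT]) (elim exE conjE, simp add: indic_inj)
    also have "(\<Sum>i\<in>T. (of_bool (\<exists>a b c. w = [a, b, c] \<and> c = indic {i} \<and> a \<noteq> Z \<and> b \<noteq> Z \<and> madd a b = indic (L - {i})) :: 'k))
        = of_bool (\<exists>i\<in>T. \<exists>a b c. w = [a, b, c] \<and> c = indic {i} \<and> a \<noteq> Z \<and> b \<noteq> Z \<and> madd a b = indic (L - {i}))"
      by (rule sum_of_bool_unique[OF finT]) (elim exE conjE, simp add: indic_inj)
    finally have Rw: "tsum (\<lambda>i. gcomm (chiS {i} :: 'k tens) 1 (psi (L - {i})) (2 * card (L - {i}) - 2)) T w =
        of_bool (\<exists>i\<in>T. \<exists>a b c. w = [a, b, c] \<and> a = indic {i} \<and> b \<noteq> Z \<and> c \<noteq> Z \<and> madd b c = indic (L - {i}))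
      - of_bool (\<exists>i\<in>T. \<exists>a b c. w = [a, b, c] \<and> c = indic {i} \<and> a \<noteq> Z \<and> b \<noteq> Z \<and> madd a b = indic (L - {i}))" .
    have "(of_bool (\<exists>a b c. w = [a, b, c] \<and> a \<noteq> Z \<and> b \<noteq> Z \<and> (madd a b, c) \<in> P)
          - of_bool (\<exists>a b c. w = [a, b, c] \<and> b \<noteq> Z \<and> c \<noteq> Z \<and> (a, madd b c) \<in> P) :: 'k) =
        of_bool (\<exists>i\<in>T. \<exists>a b c. w = [a, b, c] \<and> a = indic {i} \<and> b \<noteq> Z \<and> c \<noteq> Z \<and> madd b c = indic (L - {i}))
      - of_bool (\<exists>i\<in>T. \<exists>a b c. w = [a, b, c] \<and> c = indic {i} \<and> a \<noteq> Z \<and> b \<noteq> Z \<and> madd a b = indic (L - {i}))"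
    proof (cases "\<exists>a b c. w = [a, b, c]")
      case False
      then show ?thesis by simp
    next
      case True
      then obtain a b c where w: "w = [a, b, c]" by blast
      define N where "N = (a \<noteq> Z \<and> b \<noteq> Z \<and> c \<noteq> Z \<and> madd (madd a b) c = indic L)"
      have G1: "(a \<noteq> Z \<and> b \<noteq> Z \<and> (madd a b, c) \<in> P) \<longleftrightarrow> N \<and> \<not> (\<exists>i\<in>T. c = indic {i})"
      proof
        assume h: "a \<noteq> Z \<and> b \<noteq> Z \<and> (madd a b, c) \<in> P"
        then have n: N unfolding N_def P_def by auto
        then have "\<not> (\<exists>i\<in>T. c = indic {i})"
          using amf_key[OF finL small, of a b c] h unfolding N_def P_def T_def by auto
        with n show "N \<and> \<not> (\<exists>i\<in>T. c = indic {i})" by simp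
      next
        assume h: "N \<and> \<not> (\<exists>i\<in>T. c = indic {i})"
        then have "msupp (madd a b) \<in> K \<and> msupp c \<in> K"
          using amf_key[OF finL small, of a b c] unfolding N_def T_def by auto
        then show "a \<noteq> Z \<and> b \<noteq> Z \<and> (madd a b, c) \<in> P"
          using h madd_nz1[of a b] unfolding N_def P_def by auto
      qed
      have Nsym: "N \<longleftrightarrow> (b \<noteq> Z \<and> c \<noteq> Z \<and> a \<noteq> Z \<and> madd (madd b c) a = indic L)"
        unfolding N_def using madd_assoc[of a b c] madd_comm[of a "madd b c"] by auto
      have G2: "(b \<noteq> Z \<and> c \<noteq> Z \<and> (a, madd b c) \<in> P) \<longleftrightarrow> N \<and> \<not> (\<exists>i\<in>T. a = indic {i})"
      proof
        assume h: "b \<noteq> Z \<and> c \<noteq> Z \<and> (a, madd b c) \<in> P"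
        then have n: N unfolding Nsym P_def using madd_comm[of a "madd b c"] by auto
        then have "\<not> (\<exists>i\<in>T. a = indic {i})"
          using amf_key[OF finL small, of b c a] h unfolding Nsym P_def T_def by auto
        with n show "N \<and> \<not> (\<exists>i\<in>T. a = indic {i})" by simp
      next
        assume h: "N \<and> \<not> (\<exists>i\<in>T. a = indic {i})"
        then have "msupp (madd b c) \<in> K \<and> msupp a \<in> K"
          using amf_key[OF finL small, of b c a] unfolding Nsym T_def by auto
        then show "b \<noteq> Z \<and> c \<noteq> Z \<and> (a, madd b c) \<in> P"
          using h madd_nz1[of b c] madd_comm[of a "madd b c"] unfolding Nsym P_def by auto
      qed
      have G3: "(\<exists>i\<in>T. c = indic {i} \<and> a \<noteq> Z \<and> b \<noteq> Z \<and> madd a b = indic (L - {i})) \<longleftrightarrow> N \<and> (\<exists>i\<in>T. c = indic {i})"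
      proof
        assume "\<exists>i\<in>T. c = indic {i} \<and> a \<noteq> Z \<and> b \<noteq> Z \<and> madd a b = indic (L - {i})"
        then obtain i where i: "i \<in> T" "c = indic {i}" "a \<noteq> Z" "b \<noteq> Z" "madd a b = indic (L - {i})" by blast
        have "i \<in> L" using i(1) by (simp add: T_def)
        then have "madd (madd a b) c = indic L" using i(2,5) indic_remove by simp
        then show "N \<and> (\<exists>i\<in>T. c = indic {i})" using i unfolding N_def by (auto simp: indic_zero_iff)
      next
        assume "N \<and> (\<exists>i\<in>T. c = indic {i})"
        then obtain i where i: "i \<in> T" "c = indic {i}" and n: N by blast
        have "i \<in> L" using i(1) by (simp add: T_def)
        then have "madd (madd a b) (indic {i}) = madd (indic (L - {i})) (indic {i})"
          using n i(2) indic_remove unfolding N_def by simp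
        then have "madd a b = indic (L - {i})" by (simp add: madd_cancel_right)
        then show "\<exists>i\<in>T. c = indic {i} \<and> a \<noteq> Z \<and> b \<noteq> Z \<and> madd a b = indic (L - {i})"
          using i n unfolding N_def by blast
      qed
      have G4: "(\<exists>i\<in>T. a = indic {i} \<and> b \<noteq> Z \<and> c \<noteq> Z \<and> madd b c = indic (L - {i})) \<longleftrightarrow> N \<and> (\<exists>i\<in>T. a = indic {i})"
      proof
        assume "\<exists>i\<in>T. a = indic {i} \<and> b \<noteq> Z \<and> c \<noteq> Z \<and> madd b c = indic (L - {i})"
        then obtain i where i: "i \<in> T" "a = indic {i}" "b \<noteq> Z" "c \<noteq> Z" "madd b c = indic (L - {i})" by blast
        have "i \<in> L" using i(1) by (simp add: T_def)
        then have "madd (madd a b) c = indic L"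
          using i(2,5) indic_remove madd_assoc[of a b c] madd_comm[of "indic {i}" "indic (L - {i})"] by simp
        then show "N \<and> (\<exists>i\<in>T. a = indic {i})" using i unfolding N_def by (auto simp: indic_zero_iff)
      next
        assume "N \<and> (\<exists>i\<in>T. a = indic {i})"
        then obtain i where i: "i \<in> T" "a = indic {i}" and n: N by blast
        have "i \<in> L" using i(1) by (simp add: T_def)
        then have "madd (indic {i}) (madd b c) = madd (indic {i}) (indic (L - {i}))"
          using n i(2) indic_remove madd_assoc[of a b c] madd_comm[of "indic {i}" "indic (L - {i})"]
          unfolding N_def by simp
        then have "madd b c = indic (L - {i})" by (simp add: madd_cancel_left)
        then show "\<exists>i\<in>T. a = indic {i} \<and> b \<noteq> Z \<and> c \<noteq> Z \<and> madd b c = indic (L - {i})"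
          using i n unfolding N_def by blast
      qed
      have ex: "\<And>R. (\<exists>aa ba ca. [a, b, c] = [aa, ba, ca] \<and> R aa ba ca) \<longleftrightarrow> R a b c" by auto
      show ?thesis unfolding w ex G1 G2 G3 G4 by (rule bool_ring)
    qed
    then show "dd (tsum (\<lambda>p. mono [fst p, snd p]) P) w =
     (tsum (\<lambda>i. gcomm (chiS {i} :: 'k tens) 1 (psi (L - {i})) (2 * card (L - {i}) - 2)) T) w"
      by (subst Lw, subst Rw)
  qed
  moreover have "(tsum (\<lambda>p. mono [fst p, snd p]) P :: 'k tens) \<in> alg K"
    by (rule quad_alg[OF finP validP])
  ultimately show ?thesis unfolding is_boundary_def T_def by blast
qed


theorem mainTheorem13:
  fixes K :: "nat set set" and m :: nat
  assumes "simplicial_complex m K"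
  shows "(\<forall>i. {i} \<in> K \<longrightarrow> is_boundary K (tmul (chiS {i}) (chiS {i}) :: ('k::comm_ring_1) tens))
       \<and> (\<forall>i j. {i, j} \<in> K \<longrightarrow>
            is_boundary K (gcomm (chiS {i} :: 'k tens) 1 (chiS {j}) 1))
       \<and> (\<forall>I i. I \<in> MF m K \<and> i \<in> I \<longrightarrow>
            is_boundary K (gcomm (chiS {i} :: 'k tens) 1 (psi I) (2 * card I - 2)))
       \<and> (\<forall>L \<in> AMF m K.
            is_boundary K (tsum (\<lambda>i. gcomm (chiS {i} :: 'k tens) 1 (psi (L - {i})) (2 * card (L - {i}) - 2))
                              {i \<in> L. L - {i} \<notin> K}))"
proof -
  have 1: "\<forall>i. {i} \<in> K \<longrightarrow> is_boundary K (tmul (chiS {i}) (chiS {i}) :: ('k::comm_ring_1) tens)"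
    using part1 by blast
  have 2: "\<forall>i j. {i, j} \<in> K \<longrightarrow> is_boundary K (gcomm (chiS {i} :: 'k tens) 1 (chiS {j}) 1)"
    using part2 by blast
  have 3: "\<forall>I i. I \<in> MF m K \<and> i \<in> I \<longrightarrow>
            is_boundary K (gcomm (chiS {i} :: 'k tens) 1 (psi I) (2 * card I - 2))"
    using part3 by blast
  have 4: "\<forall>L \<in> AMF m K.
            is_boundary K (tsum (\<lambda>i. gcomm (chiS {i} :: 'k tens) 1 (psi (L - {i})) (2 * card (L - {i}) - 2))
                              {i \<in> L. L - {i} \<notin> K})"
    using part4 by blast
  show ?thesis using 1 2 3 4 by blast
qed


end
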